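(* Let $X_1,\dots,X_M$ be independent real random variables with $\mathbb{E}[X_i]=0$ and $\mathbb{E}[\exp(|X_i|^{\gamma_0}/b^{\gamma_0})]\leq2$ for all $i$, for some $\gamma_0>0$, $b>0$. Let $X:=\sum_{i=1}^MX_i$. Then for every $V\geq\operatorname{Var}X$ and every $$0\leq r\leq\sqrt V\min\Big\{\frac{\sqrt V}{b(2\log(2M))^{1/\gamma_0}},\Big(\frac{\sqrt V}{b}\Big)^{\gamma_0/(2+\gamma_0)}\Big\}$$ one has $\mathbb P\big[|X|\geq r\big]\leq3\exp\big(-\frac{r^2}{10V}\big)$. *)

theory Defs
  imports "HOL-Probability.Probability"
begin

end

theory Submission
  imports Defs
begin

lemma exp_quad: fixes x::real assumes "\<bar>x\<bar> \<le> 1" shows "exp x \<le> 1 + x + x^2"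
proof (cases "x \<ge> 0")
  case True thus ?thesis using exp_bound[of x] assms by auto
next
  case False
  have y: "1 - x + x^2/2 \<le> exp (-x)" using exp_lower_Taylor_quadratic[of "-x"] False by simp
  have p: "1 \<le> (1 + x + x^2) * (1 - x + x^2/2)"
  proof -
    have e: "(1 + x + x^2) * (1 - x + x^2/2) = 1 + x^2/2 - x^3/2 + x^4/2" by (simp add: field_simps eval_nat_numeral)
    have "x^3 \<le> 0" using False by (simp add: power_less_zero_eq less_imp_le)
    moreover have "x^4 \<ge> 0" by simp
    moreover have "x^2 \<ge> 0" by simp
    moreover have "\<And>a b c::real. b \<le> 0 \<Longrightarrow> 0 \<le> c \<Longrightarrow> 0 \<le> a \<Longrightarrow> 1 \<le> 1 + a/2 - b/2 + c/2" by linarith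
    ultimately show ?thesis unfolding e by blast
  qed
  have x2: "x^2 > 0" using False by simp
  have pos: "0 < 1 + x + x^2" using x2 assms by linarith
  have q: "0 < 1 - x + x^2/2" using False x2 by linarith
  have "exp x = 1 / exp (-x)" by (simp add: exp_minus divide_inverse)
  also have "\<dots> \<le> 1 / (1 - x + x^2/2)" using y q
    by (intro divide_left_mono) (auto intro: mult_pos_pos)
  also have "\<dots> \<le> 1 + x + x^2" by (subst pos_divide_le_eq[OF q]) (rule p)
  finally show ?thesis .
qed

context prob_space begin
lemma bern_upper:
  fixes Z :: "nat \<Rightarrow> 'a \<Rightarrow> real" and I :: "nat set"
  assumes fin: "finite I" and ind: "indep_vars (\<lambda>_. borel) Z I"
    and meas: "\<And>i. i \<in> I \<Longrightarrow> Z i \<in> borel_measurable M"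
    and bnd: "\<And>i \<omega>. i \<in> I \<Longrightarrow> \<omega> \<in> space M \<Longrightarrow> \<bar>Z i \<omega>\<bar> \<le> K"
    and mean: "\<And>i. i \<in> I \<Longrightarrow> expectation (Z i) = 0"
    and var: "(\<Sum>i\<in>I. expectation (\<lambda>\<omega>. (Z i \<omega>)^2)) \<le> W"
    and lam: "0 < l" "l * K \<le> 1"
  shows "prob {\<omega> \<in> space M. t \<le> (\<Sum>i\<in>I. Z i \<omega>)} \<le> exp (- l * t + l^2 * W)"
proof -
  have intZ: "integrable M (Z i)" if "i \<in> I" for i
    using bnd[OF that] meas[OF that] by (intro integrable_const_bound[where B=K]) auto
  have intZ2: "integrable M (\<lambda>\<omega>. (Z i \<omega>)^2)" if i: "i \<in> I" for i
  proof (rule integrable_const_bound[where B="K^2"])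
    show "AE \<omega> in M. norm ((Z i \<omega>)^2) \<le> K^2"
    proof (rule AE_I2)
      fix \<omega> assume w: "\<omega> \<in> space M"
      have "norm ((Z i \<omega>)^2) = \<bar>Z i \<omega>\<bar>^2" by simp
      also have "\<dots> \<le> K^2" by (rule power_mono[OF bnd[OF i w] abs_ge_zero])
      finally show "norm ((Z i \<omega>)^2) \<le> K^2" .
    qed
  qed (use meas[OF i] in simp)
  have intE: "integrable M (\<lambda>\<omega>. exp (l * Z i \<omega>))" if i: "i \<in> I" for i
  proof (rule integrable_const_bound[where B="exp (l*K)"])
    show "AE \<omega> in M. norm (exp (l * Z i \<omega>)) \<le> exp (l*K)"
    proof (rule AE_I2)
      fix \<omega> assume w: "\<omega> \<in> space M"
      have "Z i \<omega> \<le> K" using bnd[OF i w] by linarith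
      hence "l * Z i \<omega> \<le> l * K" using lam by (intro mult_left_mono) auto
      thus "norm (exp (l * Z i \<omega>)) \<le> exp (l*K)" by simp
    qed
  qed (use meas[OF i] in simp)
  have ind2: "indep_vars (\<lambda>_. borel) (\<lambda>i \<omega>. exp (l * Z i \<omega>)) I"
    by (rule indep_vars_compose2[OF ind]) auto
  have prodint: "expectation (\<lambda>\<omega>. \<Prod>i\<in>I. exp (l * Z i \<omega>)) = (\<Prod>i\<in>I. expectation (\<lambda>\<omega>. exp (l * Z i \<omega>)))"
    and prodintg: "integrable M (\<lambda>\<omega>. \<Prod>i\<in>I. exp (l * Z i \<omega>))"
    using indep_vars_lebesgue_integral[OF fin ind2 intE] indep_vars_integrable[OF fin ind2 intE] by auto
  have each: "expectation (\<lambda>\<omega>. exp (l * Z i \<omega>)) \<le> exp (l^2 * expectation (\<lambda>\<omega>. (Z i \<omega>)^2))" if i: "i \<in> I" for i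
  proof -
    have "expectation (\<lambda>\<omega>. exp (l * Z i \<omega>)) \<le> expectation (\<lambda>\<omega>. 1 + l * Z i \<omega> + l^2 * (Z i \<omega>)^2)"
    proof (rule integral_mono)
      show "integrable M (\<lambda>\<omega>. 1 + l * Z i \<omega> + l^2 * (Z i \<omega>)^2)"
        using intZ[OF i] intZ2[OF i] by auto
      fix \<omega> assume w: "\<omega> \<in> space M"
      have "\<bar>l * Z i \<omega>\<bar> \<le> l * K" using bnd[OF i w] lam by (simp add: abs_mult mult_left_mono)
      hence "exp (l * Z i \<omega>) \<le> 1 + l * Z i \<omega> + (l * Z i \<omega>)^2" using lam by (intro exp_quad) simp
      thus "exp (l * Z i \<omega>) \<le> 1 + l * Z i \<omega> + l^2 * (Z i \<omega>)^2" by (simp add: power_mult_distrib)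
    qed (use intE[OF i] in auto)
    also have "\<dots> = 1 + l^2 * expectation (\<lambda>\<omega>. (Z i \<omega>)^2)"
      using intZ[OF i] intZ2[OF i] mean[OF i] by (simp add: prob_space)
    also have "\<dots> \<le> exp (l^2 * expectation (\<lambda>\<omega>. (Z i \<omega>)^2))" by (rule exp_ge_add_one_self)
    finally show ?thesis .
  qed
  have "prob {\<omega> \<in> space M. t \<le> (\<Sum>i\<in>I. Z i \<omega>)} \<le> prob {\<omega> \<in> space M. exp (l * t) \<le> (\<Prod>i\<in>I. exp (l * Z i \<omega>))}"
  proof (rule finite_measure_mono)
    show "{\<omega> \<in> space M. exp (l * t) \<le> (\<Prod>i\<in>I. exp (l * Z i \<omega>))} \<in> events"
      using meas by measurable
    show "{\<omega> \<in> space M. t \<le> (\<Sum>i\<in>I. Z i \<omega>)} \<subseteq> {\<omega> \<in> space M. exp (l * t) \<le> (\<Prod>i\<in>I. exp (l * Z i \<omega>))}"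
      using lam by (auto simp: exp_sum[OF fin, symmetric] sum_distrib_left[symmetric] mult_left_mono)
  qed
  also have "\<dots> \<le> expectation (\<lambda>\<omega>. \<Prod>i\<in>I. exp (l * Z i \<omega>)) / exp (l * t)"
    by (rule integral_Markov_inequality_measure[OF prodintg]) (use meas in \<open>auto intro!: prod_nonneg\<close>)
  also have "\<dots> \<le> (\<Prod>i\<in>I. exp (l^2 * expectation (\<lambda>\<omega>. (Z i \<omega>)^2))) / exp (l * t)"
    unfolding prodint by (intro divide_right_mono prod_mono) (auto simp: each intro!: integral_nonneg_AE)
  also have "\<dots> = exp (l^2 * (\<Sum>i\<in>I. expectation (\<lambda>\<omega>. (Z i \<omega>)^2)) - l * t)"
    by (simp add: exp_sum[OF fin, symmetric] sum_distrib_left exp_diff)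
  also have "\<dots> \<le> exp (- l * t + l^2 * W)" using var by (simp add: mult_left_mono)
  finally show ?thesis .
qed
end


lemma sq_le_exp:
  fixes x b g :: real and k :: nat
  assumes b: "b > 0" and g: "g > 0" and k: "k > 0" "2 \<le> g * k"
  shows "x^2 \<le> b^2 + b^2 * (real k ^ k * exp (\<bar>x\<bar> powr g / b powr g))"
proof -
  define u where "u = \<bar>x\<bar> / b"
  have u0: "u \<ge> 0" using b by (simp add: u_def)
  have xu: "x^2 = b^2 * u^2" using b by (simp add: u_def power_divide)
  have kk: "0 \<le> b^2 * (real k ^ k * exp (\<bar>x\<bar> powr g / b powr g))" by simp
  show ?thesis
  proof (cases "u \<le> 1")
    case True
    hence "u^2 \<le> 1" using u0 by (simp add: power_le_one)
    hence "x^2 \<le> b^2" unfolding xu using b by (simp add: mult_left_le)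
    thus ?thesis using kk by linarith
  next
    case False
    define y where "y = u powr g"
    have y0: "y \<ge> 0" by (simp add: y_def)
    have yeq: "y = \<bar>x\<bar> powr g / b powr g" using b by (simp add: y_def u_def powr_divide)
    have "u^2 = u powr 2" using False by (simp add: powr_realpow)
    also have "\<dots> \<le> u powr (g * k)" using False k by (intro powr_mono) auto
    also have "\<dots> = y ^ k" using False by (simp add: y_def powr_powr[symmetric] powr_realpow)
    also have "\<dots> = real k ^ k * (y / k) ^ k" using k by (simp add: power_divide)
    also have "\<dots> \<le> real k ^ k * (1 + y / k) ^ k" using y0
      by (intro mult_left_mono power_mono) auto
    also have "\<dots> \<le> real k ^ k * exp y" using y0 k
      by (intro mult_left_mono exp_ge_one_plus_x_over_n_power_n) auto
    finally have "u^2 \<le> real k ^ k * exp y" .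
    hence "x^2 \<le> b^2 * (real k ^ k * exp y)" unfolding xu using b by (intro mult_left_mono) auto
    hence h: "x^2 \<le> b^2 * (real k ^ k * exp (\<bar>x\<bar> powr g / b powr g))" unfolding yeq .
    show ?thesis by (rule add_increasing[OF zero_le_power2 h])
  qed
qed

lemma amgm_abs:
  fixes x e :: real assumes "e > 0"
  shows "\<bar>x\<bar> \<le> e * x^2 / 2 + 1 / (2 * e)"
proof -
  have "0 \<le> (e * \<bar>x\<bar> - 1)^2" by simp
  hence "2 * e * \<bar>x\<bar> \<le> e^2 * x^2 + 1" by (simp add: power2_eq_square algebra_simps)
  hence "\<bar>x\<bar> \<le> (e^2 * x^2 + 1) / (2 * e)" using assms by (simp add: pos_le_divide_eq mult.commute mult.left_commute)
  also have "\<dots> = e * x^2 / 2 + 1 / (2 * e)" using assms by (simp add: field_simps power2_eq_square)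
  finally show ?thesis .
qed

lemma Tr_le_V:
  fixes g b V r :: real and m :: nat
  assumes g: "g > 0" and b: "b > 0" and V: "V > 0" and r: "r > 0" and m: "m \<ge> 1"
    and rle: "r \<le> sqrt V * min (sqrt V / (b * (2 * ln (2 * real m)) powr (1 / g)))
                             ((sqrt V / b) powr (g / (2 + g)))"
  shows "b * (ln (2 * real m) + r^2 / V / 10) powr (1 / g) * r \<le> V"
proof -
  define nu where "nu = r^2 / V"
  define s where "s = ln (2 * real m) + nu / 10"
  have lnpos: "ln (2 * real m) > 0" using m by simp
  have nu0: "nu \<ge> 0" using V by (simp add: nu_def)
  have s0: "s \<ge> 0" using lnpos nu0 by (simp add: s_def)
  have sV: "sqrt V * sqrt V = V" using V by simp
  have main: "b * s powr (1/g) * r \<le> V"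
  proof (cases "nu / 10 \<le> ln (2 * real m)")
    case True
    define D where "D = b * (2 * ln (2 * real m)) powr (1 / g)"
    have D0: "D > 0" using b lnpos by (simp add: D_def)
    have "sqrt V * min (sqrt V / (b * (2 * ln (2 * real m)) powr (1 / g)))
                             ((sqrt V / b) powr (g / (2 + g))) \<le> sqrt V * (sqrt V / D)"
      unfolding D_def using V by (intro mult_left_mono) auto
    hence "r \<le> sqrt V * (sqrt V / D)" using rle by linarith
    hence rD: "r * D \<le> V" using D0 sV by (simp add: pos_le_divide_eq mult.commute mult.left_commute)
    have "s powr (1/g) \<le> (2 * ln (2 * real m)) powr (1/g)"
      using True s0 g by (intro powr_mono2) (auto simp: s_def)
    hence "b * s powr (1/g) \<le> D" using b by (simp add: D_def)
    hence "b * s powr (1/g) * r \<le> D * r" using r by (intro mult_right_mono) auto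
    thus ?thesis using rD by (simp add: mult.commute)
  next
    case False
    define q where "q = sqrt V / b"
    have q0: "q > 0" using V b by (simp add: q_def)
    have sn: "s \<le> nu" using False nu0 by (simp add: s_def)
    have "sqrt V * min (sqrt V / (b * (2 * ln (2 * real m)) powr (1 / g)))
                             ((sqrt V / b) powr (g / (2 + g))) \<le> sqrt V * q powr (g / (2 + g))"
      unfolding q_def using V by (intro mult_left_mono) auto
    hence "r \<le> sqrt V * q powr (g / (2 + g))" using rle by linarith
    hence rq: "r / sqrt V \<le> q powr (g / (2 + g))" using V by (simp add: divide_le_eq mult.commute)
    have "nu = (r / sqrt V)^2" using V by (simp add: nu_def power_divide)
    also have "\<dots> \<le> (q powr (g / (2 + g)))^2" using rq r V by (intro power_mono) auto
    also have "\<dots> = q powr (2 * g / (2 + g))" using q0 by (simp add: powr_realpow[symmetric] powr_powr mult.commute)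
    finally have nuq: "nu \<le> q powr (2 * g / (2 + g))" .
    have "s powr (1/g) \<le> nu powr (1/g)" using sn s0 g by (intro powr_mono2) auto
    also have "\<dots> \<le> (q powr (2 * g / (2 + g))) powr (1/g)" using nuq nu0 g by (intro powr_mono2) auto
    also have "\<dots> = q powr (2 / (2 + g))" using g by (simp add: powr_powr)
    finally have sq: "s powr (1/g) \<le> q powr (2 / (2 + g))" .
    have "b * s powr (1/g) * r \<le> b * q powr (2 / (2 + g)) * (sqrt V * q powr (g / (2 + g)))"
      using sq b r \<open>r \<le> sqrt V * q powr (g / (2 + g))\<close>
      by (intro mult_mono) (auto)
    also have "\<dots> = b * sqrt V * (q powr (2 / (2 + g)) * q powr (g / (2 + g)))" by (simp add: algebra_simps)
    also have "q powr (2 / (2 + g)) * q powr (g / (2 + g)) = q"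
      using q0 g by (simp add: powr_add[symmetric] add_divide_distrib[symmetric])
    also have "b * sqrt V * q = V" using b sV by (simp add: q_def)
    finally show ?thesis .
  qed
  thus ?thesis by (simp add: s_def nu_def)
qed

context prob_space begin

lemma expmom_int:
  fixes f :: "'a \<Rightarrow> real"
  assumes f: "f \<in> borel_measurable M"
    and N: "(\<integral>\<^sup>+ \<omega>. ennreal (exp (\<bar>f \<omega>\<bar> powr g / b powr g)) \<partial>M) \<le> 2"
  shows "integrable M (\<lambda>\<omega>. exp (\<bar>f \<omega>\<bar> powr g / b powr g))"
    and "expectation (\<lambda>\<omega>. exp (\<bar>f \<omega>\<bar> powr g / b powr g)) \<le> 2"
proof -
  have m: "(\<lambda>\<omega>. exp (\<bar>f \<omega>\<bar> powr g / b powr g)) \<in> borel_measurable M" using f by measurable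
  have fin: "(\<integral>\<^sup>+ \<omega>. ennreal (exp (\<bar>f \<omega>\<bar> powr g / b powr g)) \<partial>M) < \<infinity>"
    using N by (simp add: le_less_trans[OF N])
  show "integrable M (\<lambda>\<omega>. exp (\<bar>f \<omega>\<bar> powr g / b powr g))"
    by (rule integrableI_nonneg[OF m]) (use fin in auto)
  have "expectation (\<lambda>\<omega>. exp (\<bar>f \<omega>\<bar> powr g / b powr g)) = enn2real (\<integral>\<^sup>+ \<omega>. ennreal (exp (\<bar>f \<omega>\<bar> powr g / b powr g)) \<partial>M)"
    by (rule integral_eq_nn_integral[OF m]) auto
  also have "\<dots> \<le> enn2real 2" by (rule enn2real_mono[OF N]) simp
  finally show "expectation (\<lambda>\<omega>. exp (\<bar>f \<omega>\<bar> powr g / b powr g)) \<le> 2" by simp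
qed

lemma tail_bound:
  fixes f :: "'a \<Rightarrow> real"
  assumes f: "f \<in> borel_measurable M"
    and N: "(\<integral>\<^sup>+ \<omega>. ennreal (exp (\<bar>f \<omega>\<bar> powr g / b powr g)) \<partial>M) \<le> 2"
    and g: "g > 0" and b: "b > 0" and s: "s > 0"
  shows "prob {\<omega> \<in> space M. b * s powr (1/g) < \<bar>f \<omega>\<bar>} \<le> 2 * exp (- s)"
proof -
  note I = expmom_int[OF f N]
  have sub: "{\<omega> \<in> space M. b * s powr (1/g) < \<bar>f \<omega>\<bar>} \<subseteq> {\<omega> \<in> space M. exp s \<le> exp (\<bar>f \<omega>\<bar> powr g / b powr g)}"
  proof
    fix \<omega> assume "\<omega> \<in> {\<omega> \<in> space M. b * s powr (1/g) < \<bar>f \<omega>\<bar>}"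
    hence w: "\<omega> \<in> space M" and lt: "b * s powr (1/g) < \<bar>f \<omega>\<bar>" by auto
    have "(b * s powr (1/g)) powr g \<le> \<bar>f \<omega>\<bar> powr g" using lt b s g by (intro powr_mono2) auto
    also have "(b * s powr (1/g)) powr g = b powr g * s"
      using b s g by (simp add: powr_mult powr_powr)
    finally have "s \<le> \<bar>f \<omega>\<bar> powr g / b powr g" using b by (simp add: pos_le_divide_eq mult.commute)
    thus "\<omega> \<in> {\<omega> \<in> space M. exp s \<le> exp (\<bar>f \<omega>\<bar> powr g / b powr g)}" using w by simp
  qed
  have "prob {\<omega> \<in> space M. b * s powr (1/g) < \<bar>f \<omega>\<bar>} \<le> prob {\<omega> \<in> space M. exp s \<le> exp (\<bar>f \<omega>\<bar> powr g / b powr g)}"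
    by (rule finite_measure_mono[OF sub]) (use f in measurable)
  also have "\<dots> \<le> expectation (\<lambda>\<omega>. exp (\<bar>f \<omega>\<bar> powr g / b powr g)) / exp s"
    by (rule integral_Markov_inequality_measure[OF I(1)]) (use f in auto)
  also have "\<dots> \<le> 2 / exp s" using I(2) by (simp add: divide_right_mono)
  also have "\<dots> = 2 * exp (- s)" by (simp add: exp_minus field_simps)
  finally show ?thesis .
qed

lemma sq_int:
  fixes f :: "'a \<Rightarrow> real"
  assumes f: "f \<in> borel_measurable M"
    and N: "(\<integral>\<^sup>+ \<omega>. ennreal (exp (\<bar>f \<omega>\<bar> powr g / b powr g)) \<partial>M) \<le> 2"
    and g: "g > 0" and b: "b > 0"
  shows "integrable M (\<lambda>\<omega>. (f \<omega>)^2)"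
proof -
  note I = expmom_int[OF f N]
  define k where "k = nat \<lceil>2 / g\<rceil> + 1"
  have k0: "k > 0" by (simp add: k_def)
  have "2 / g \<le> real k" unfolding k_def by linarith
  hence k2: "2 \<le> g * real k" using g by (simp add: divide_le_eq mult.commute)
  show ?thesis
  proof (rule Bochner_Integration.integrable_bound)
    show "integrable M (\<lambda>\<omega>. b^2 + b^2 * (real k ^ k * exp (\<bar>f \<omega>\<bar> powr g / b powr g)))"
      using I(1) by auto
    show "(\<lambda>\<omega>. (f \<omega>)^2) \<in> borel_measurable M" using f by measurable
    show "AE \<omega> in M. norm ((f \<omega>)^2) \<le> norm (b^2 + b^2 * (real k ^ k * exp (\<bar>f \<omega>\<bar> powr g / b powr g)))"
      using sq_le_exp[OF b g k0 k2] by (intro AE_I2) (auto intro: order.trans[OF _ abs_ge_self])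
  qed
qed

end


theorem mainTheorem8:
  fixes M :: "'a measure" and X :: "nat \<Rightarrow> 'a \<Rightarrow> real"
    and m :: nat and \<gamma>0 b V r :: real
  assumes "prob_space M"
    and "m \<ge> 1"
    and "\<And>i. i \<in> {1..m} \<Longrightarrow> X i \<in> borel_measurable M"
    and "prob_space.indep_vars M (\<lambda>_. borel) X {1..m}"
    and "\<gamma>0 > 0" and "b > 0"
    and "\<And>i. i \<in> {1..m} \<Longrightarrow> prob_space.expectation M (X i) = 0"
    and "\<And>i. i \<in> {1..m} \<Longrightarrow>
           (\<integral>\<^sup>+ \<omega>. ennreal (exp (\<bar>X i \<omega>\<bar> powr \<gamma>0 / b powr \<gamma>0)) \<partial>M) \<le> 2"
    and "V \<ge> prob_space.variance M (\<lambda>\<omega>. \<Sum>i=1..m. X i \<omega>)"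
    and "0 \<le> r"
    and "r \<le> sqrt V * min (sqrt V / (b * (2 * ln (2 * real m)) powr (1 / \<gamma>0)))
                             ((sqrt V / b) powr (\<gamma>0 / (2 + \<gamma>0)))"
  shows "measure M {\<omega> \<in> space M. \<bar>\<Sum>i=1..m. X i \<omega>\<bar> \<ge> r} \<le> 3 * exp (- (r^2 / (10 * V)))"
proof -
  interpret prob_space M by fact
  note meas = assms(3) and indep = assms(4) and g = assms(5) and b = assms(6)
    and mean = assms(7) and N = assms(8) and Vvar = assms(9) and r0 = assms(10) and rle = assms(11)
  let ?I = "{1..m}"
  define Q where "Q = exp (- (r^2 / (10 * V)))"
  show ?thesis
  proof (cases "1 \<le> 3 * Q")
    case True
    thus ?thesis unfolding Q_def[symmetric] using prob_le_1 by (meson order.trans)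
  next
    case False
    hence Q3: "Q < 1/3" by simp
    have V0: "V > 0"
    proof (rule ccontr)
      assume "\<not> V > 0"
      hence "r^2 / (10 * V) \<le> 0" by (intro divide_nonneg_nonpos) auto
      hence "1 \<le> Q" by (simp add: Q_def)
      thus False using Q3 by simp
    qed
    have e3: "exp (-1::real) \<ge> 1/3"
      using exp_le by (simp add: exp_minus field_simps)
    have "exp (- (r^2 / (10 * V))) < exp (-1)" using Q3 e3 unfolding Q_def by linarith
    hence "r^2 / (10 * V) > 1" by simp
    hence nu10: "r^2 / V > 10" using V0 by (simp add: field_simps)
    have r: "r > 0"
    proof (rule ccontr)
      assume "\<not> r > 0" hence "r = 0" using r0 by simp
      thus False using nu10 by simp
    qed
    define s where "s = ln (2 * real m) + r^2 / V / 10"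
    define T where "T = b * s powr (1 / \<gamma>0)"
    have lnpos: "ln (2 * real m) > 0" using assms(2) by simp
    have s0: "s > 0" unfolding s_def using lnpos V0 by (simp add: add_pos_nonneg)
    have T0: "T > 0" using b s0 by (simp add: T_def)
    have TrV: "T * r \<le> V" unfolding T_def s_def by (rule Tr_le_V[OF g b V0 r assms(2) rle])
    have Qs: "2 * real m * exp (- s) = Q"
    proof -
      have e: "- s = - ln (2 * real m) + (- (r^2 / (10 * V)))" unfolding s_def
        by (simp add: divide_divide_eq_left mult.commute)
      have "exp (- s) = exp (- ln (2 * real m)) * Q" unfolding Q_def by (simp only: e exp_add)
      moreover have "exp (- ln (2 * real m)) = 1 / (2 * real m)" using assms(2) by (simp add: exp_minus inverse_eq_divide)
      moreover have "real m > 0" using assms(2) by simp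
      ultimately show ?thesis by simp
    qed
    have intX2: "integrable M (\<lambda>\<omega>. (X i \<omega>)^2)" if i: "i \<in> ?I" for i
      by (rule sq_int[OF meas[OF i] N[OF i] g b])
    have intX: "integrable M (X i)" if i: "i \<in> ?I" for i
    proof (rule Bochner_Integration.integrable_bound)
      show "integrable M (\<lambda>\<omega>. 1 + (X i \<omega>)^2)" using intX2[OF i] by auto
      show "AE \<omega> in M. norm (X i \<omega>) \<le> norm (1 + (X i \<omega>)^2)"
      proof (rule AE_I2)
        fix \<omega>
        have "\<bar>X i \<omega>\<bar> \<le> 1 * (X i \<omega>)^2 / 2 + 1 / (2 * 1)" by (rule amgm_abs) simp
        thus "norm (X i \<omega>) \<le> norm (1 + (X i \<omega>)^2)" by simp
      qed
    qed (use meas[OF i] in simp)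
    have intXX: "integrable M (\<lambda>\<omega>. X i \<omega> * X j \<omega>)" if i: "i \<in> ?I" and j: "j \<in> ?I" for i j
    proof (rule Bochner_Integration.integrable_bound)
      show "integrable M (\<lambda>\<omega>. (X i \<omega>)^2 + (X j \<omega>)^2)" using intX2[OF i] intX2[OF j] by auto
      show "AE \<omega> in M. norm (X i \<omega> * X j \<omega>) \<le> norm ((X i \<omega>)^2 + (X j \<omega>)^2)"
      proof (rule AE_I2)
        fix \<omega>
        have "0 \<le> (\<bar>X i \<omega>\<bar> - \<bar>X j \<omega>\<bar>)^2" by simp
        hence "\<bar>X i \<omega>\<bar> * \<bar>X j \<omega>\<bar> \<le> (X i \<omega>)^2 + (X j \<omega>)^2"
          by (simp add: power2_eq_square algebra_simps) (smt (verit) zero_le_square)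
        thus "norm (X i \<omega> * X j \<omega>) \<le> norm ((X i \<omega>)^2 + (X j \<omega>)^2)" by (simp add: abs_mult)
      qed
    qed (use meas[OF i] meas[OF j] in simp)
    have cross: "expectation (\<lambda>\<omega>. X i \<omega> * X j \<omega>) = 0" if i: "i \<in> ?I" and j: "j \<in> ?I" and ij: "i \<noteq> j" for i j
    proof -
      have ind2: "indep_vars (\<lambda>_. borel) X {i, j}" by (rule indep_vars_subset[OF indep]) (use i j in auto)
      have "expectation (\<lambda>\<omega>. \<Prod>k\<in>{i,j}. X k \<omega>) = (\<Prod>k\<in>{i,j}. expectation (X k))"
        by (rule indep_vars_lebesgue_integral[OF _ ind2]) (use i j intX in auto)
      also have "\<dots> = 0" using mean[OF i] ij by simp
      finally show ?thesis using ij by simp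
    qed
    have sumV: "(\<Sum>i\<in>?I. expectation (\<lambda>\<omega>. (X i \<omega>)^2)) \<le> V"
    proof -
      have ES: "expectation (\<lambda>\<omega>. \<Sum>i\<in>?I. X i \<omega>) = 0"
        using intX mean by (simp add: Bochner_Integration.integral_sum)
      have sq: "(\<lambda>\<omega>. (\<Sum>i\<in>?I. X i \<omega>)^2) = (\<lambda>\<omega>. \<Sum>i\<in>?I. \<Sum>j\<in>?I. X i \<omega> * X j \<omega>)"
        by (simp add: power2_eq_square sum_product)
      have "variance (\<lambda>\<omega>. \<Sum>i=1..m. X i \<omega>) = expectation (\<lambda>\<omega>. \<Sum>i\<in>?I. \<Sum>j\<in>?I. X i \<omega> * X j \<omega>)"
        using ES sq by simp
      also have "\<dots> = (\<Sum>i\<in>?I. expectation (\<lambda>\<omega>. \<Sum>j\<in>?I. X i \<omega> * X j \<omega>))"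
        by (rule Bochner_Integration.integral_sum) (auto intro!: Bochner_Integration.integrable_sum intXX)
      also have "\<dots> = (\<Sum>i\<in>?I. \<Sum>j\<in>?I. expectation (\<lambda>\<omega>. X i \<omega> * X j \<omega>))"
        by (intro sum.cong refl Bochner_Integration.integral_sum) (auto intro!: intXX)
      also have "\<dots> = (\<Sum>i\<in>?I. \<Sum>j\<in>?I. if i = j then expectation (\<lambda>\<omega>. (X i \<omega>)^2) else 0)"
        by (intro sum.cong refl) (auto simp: cross power2_eq_square)
      also have "\<dots> = (\<Sum>i\<in>?I. expectation (\<lambda>\<omega>. (X i \<omega>)^2))" by simp
      finally show ?thesis using Vvar by simp
    qed
    define Y where "Y = (\<lambda>i \<omega>. if \<bar>X i \<omega>\<bar> \<le> T then X i \<omega> else 0)"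
    define mu where "mu = (\<lambda>i. expectation (Y i))"
    define Z where "Z = (\<lambda>i \<omega>. Y i \<omega> - mu i)"
    define A where "A = (\<lambda>i. {\<omega> \<in> space M. T < \<bar>X i \<omega>\<bar>})"
    have measY: "Y i \<in> borel_measurable M" if i: "i \<in> ?I" for i
      unfolding Y_def using meas[OF i] by measurable
    have bndY: "\<bar>Y i \<omega>\<bar> \<le> T" for i \<omega> using T0 by (simp add: Y_def)
    have intY: "integrable M (Y i)" if i: "i \<in> ?I" for i
      using bndY measY[OF i] by (intro integrable_const_bound[where B=T]) auto
    have intY2: "integrable M (\<lambda>\<omega>. (Y i \<omega>)^2)" if i: "i \<in> ?I" for i
    proof (rule integrable_const_bound[where B="T^2"])
      show "AE \<omega> in M. norm ((Y i \<omega>)^2) \<le> T^2"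
      proof (rule AE_I2)
        fix \<omega>
        have "norm ((Y i \<omega>)^2) = \<bar>Y i \<omega>\<bar>^2" by simp
        also have "\<dots> \<le> T^2" by (rule power_mono[OF bndY abs_ge_zero])
        finally show "norm ((Y i \<omega>)^2) \<le> T^2" .
      qed
    qed (use measY[OF i] in simp)
    have mubnd: "\<bar>mu i\<bar> \<le> T" if i: "i \<in> ?I" for i
    proof -
      have "mu i \<le> expectation (\<lambda>_. T)" unfolding mu_def
        by (rule integral_mono[OF intY[OF i]]) (use bndY in \<open>auto simp: abs_le_iff\<close>)
      moreover have "expectation (\<lambda>_. -T) \<le> mu i" unfolding mu_def
        by (rule integral_mono[OF _ intY[OF i]]) (use bndY in \<open>auto simp: abs_le_iff\<close>, smt (verit) bndY)
      ultimately show ?thesis by (simp add: abs_le_iff prob_space)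
    qed
    have measZ: "Z i \<in> borel_measurable M" if i: "i \<in> ?I" for i
      unfolding Z_def using measY[OF i] by measurable
    have bndZ: "\<bar>Z i \<omega>\<bar> \<le> 2 * T" if i: "i \<in> ?I" for i \<omega>
      using bndY[of i \<omega>] mubnd[OF i] by (simp add: Z_def abs_le_iff)
    have meanZ: "expectation (Z i) = 0" if i: "i \<in> ?I" for i
      unfolding Z_def using intY[OF i] by (simp add: mu_def prob_space)
    have EZ2: "expectation (\<lambda>\<omega>. (Z i \<omega>)^2) \<le> expectation (\<lambda>\<omega>. (X i \<omega>)^2)" if i: "i \<in> ?I" for i
    proof -
      have "(\<lambda>\<omega>. (Z i \<omega>)^2) = (\<lambda>\<omega>. (Y i \<omega>)^2 - 2 * mu i * Y i \<omega> + (mu i)^2)"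
        by (simp add: Z_def power2_eq_square algebra_simps)
      hence "expectation (\<lambda>\<omega>. (Z i \<omega>)^2) = expectation (\<lambda>\<omega>. (Y i \<omega>)^2) - 2 * mu i * mu i + (mu i)^2"
        using intY[OF i] intY2[OF i] by (simp add: prob_space mu_def)
      also have "\<dots> \<le> expectation (\<lambda>\<omega>. (Y i \<omega>)^2)" by (simp add: power2_eq_square)
      also have "\<dots> \<le> expectation (\<lambda>\<omega>. (X i \<omega>)^2)"
        by (rule integral_mono[OF intY2[OF i] intX2[OF i]]) (simp add: Y_def)
      finally show ?thesis .
    qed
    have sumZ2: "(\<Sum>i\<in>?I. expectation (\<lambda>\<omega>. (Z i \<omega>)^2)) \<le> V"
      using order.trans[OF sum_mono[OF EZ2] sumV] by simp
    have indZ: "indep_vars (\<lambda>_. borel) Z ?I"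
      unfolding Z_def Y_def
      by (rule indep_vars_compose2[OF indep, where Y="\<lambda>i x. (if \<bar>x\<bar> \<le> T then x else 0) - mu i"]) measurable
    have indNZ: "indep_vars (\<lambda>_. borel) (\<lambda>i \<omega>. - Z i \<omega>) ?I"
      unfolding Z_def Y_def
      by (rule indep_vars_compose2[OF indep, where Y="\<lambda>i x. - ((if \<bar>x\<bar> \<le> T then x else 0) - mu i)"]) measurable
    define e where "e = 2 / r"
    have e0: "e > 0" using r by (simp add: e_def)
    have measA: "A i \<in> events" if i: "i \<in> ?I" for i
      unfolding A_def using meas[OF i] by measurable
    have probA: "prob (A i) \<le> 2 * exp (- s)" if i: "i \<in> ?I" for i
      unfolding A_def T_def by (rule tail_bound[OF meas[OF i] N[OF i] g b s0])
    have sumA: "(\<Sum>i\<in>?I. prob (A i)) \<le> Q"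
    proof -
      have "(\<Sum>i\<in>?I. prob (A i)) \<le> (\<Sum>i\<in>?I. 2 * exp (- s))" by (rule sum_mono[OF probA])
      also have "\<dots> = Q" using Qs by simp
      finally show ?thesis .
    qed
    have mui: "\<bar>mu i\<bar> \<le> e / 2 * expectation (\<lambda>\<omega>. (X i \<omega>)^2) + 1 / (2 * e) * prob (A i)" if i: "i \<in> ?I" for i
    proof -
      define W where "W = (\<lambda>\<omega>. X i \<omega> - Y i \<omega>)"
      define B where "B = (\<lambda>\<omega>. e / 2 * (X i \<omega>)^2 + 1 / (2 * e) * indicator (A i) \<omega>)"
      have intW: "integrable M W" unfolding W_def using intX[OF i] intY[OF i] by auto
      have intB: "integrable M B" unfolding B_def using intX2[OF i] measA[OF i]
        by (intro Bochner_Integration.integrable_add Bochner_Integration.integrable_mult_right integrable_real_indicator) (auto simp: less_top[symmetric])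
      have EB: "expectation B = e / 2 * expectation (\<lambda>\<omega>. (X i \<omega>)^2) + 1 / (2 * e) * prob (A i)"
      proof -
        have "expectation B = expectation (\<lambda>\<omega>. e / 2 * (X i \<omega>)^2) + expectation (\<lambda>\<omega>. 1 / (2 * e) * indicator (A i) \<omega>)"
          unfolding B_def using intX2[OF i] measA[OF i]
          by (intro Bochner_Integration.integral_add Bochner_Integration.integrable_mult_right integrable_real_indicator) (auto simp: less_top[symmetric])
        also have "\<dots> = e / 2 * expectation (\<lambda>\<omega>. (X i \<omega>)^2) + 1 / (2 * e) * expectation (indicator (A i))"
          by (simp only: integral_mult_right_zero)
        also have "expectation (indicator (A i)) = prob (A i)"
          using measA[OF i] by (simp add: Int_absorb2 sets.sets_into_space)
        finally show ?thesis .
      qed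
      have WB: "\<bar>W \<omega>\<bar> \<le> B \<omega>" if w: "\<omega> \<in> space M" for \<omega>
      proof (cases "\<bar>X i \<omega>\<bar> \<le> T")
        case True
        thus ?thesis using e0 by (simp add: W_def Y_def B_def)
      next
        case False
        hence "\<omega> \<in> A i" using w by (simp add: A_def)
        moreover have "\<bar>X i \<omega>\<bar> \<le> e * (X i \<omega>)^2 / 2 + 1 / (2 * e)" by (rule amgm_abs[OF e0])
        ultimately show ?thesis using False by (simp add: W_def Y_def B_def)
      qed
      have EW: "expectation W = - mu i" unfolding W_def mu_def using intX[OF i] intY[OF i] mean[OF i] by simp
      have "expectation W \<le> expectation B"
        by (rule integral_mono[OF intW intB]) (use WB in \<open>auto simp: abs_le_iff\<close>)
      moreover have "- expectation W \<le> expectation B"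
      proof -
        have "expectation (\<lambda>\<omega>. - W \<omega>) \<le> expectation B"
          by (rule integral_mono[OF _ intB]) (use WB intW in \<open>auto simp: abs_le_iff\<close>)
        thus ?thesis by simp
      qed
      ultimately show ?thesis using EW EB by (simp add: abs_le_iff)
    qed
    have muS: "(\<Sum>i\<in>?I. \<bar>mu i\<bar>) \<le> r / 5"
    proof -
      have "(\<Sum>i\<in>?I. \<bar>mu i\<bar>) \<le> (\<Sum>i\<in>?I. e / 2 * expectation (\<lambda>\<omega>. (X i \<omega>)^2) + 1 / (2 * e) * prob (A i))"
        by (rule sum_mono[OF mui])
      also have "\<dots> = e / 2 * (\<Sum>i\<in>?I. expectation (\<lambda>\<omega>. (X i \<omega>)^2)) + 1 / (2 * e) * (\<Sum>i\<in>?I. prob (A i))"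
        by (simp add: sum.distrib sum_distrib_left)
      also have "\<dots> \<le> e / 2 * V + 1 / (2 * e) * Q"
        using sumV sumA e0 by (intro add_mono mult_left_mono) auto
      also have "\<dots> = V / r + r / 4 * Q" using r by (simp add: e_def)
      also have "\<dots> \<le> r / 10 + r / 12"
      proof (intro add_mono)
        have "10 * V < r^2" using nu10 V0 by (simp add: field_simps)
        thus "V / r \<le> r / 10" using r by (simp add: field_simps power2_eq_square)
        show "r / 4 * Q \<le> r / 12" using Q3 r by simp
      qed
      also have "\<dots> \<le> r / 5" using r by simp
      finally show ?thesis .
    qed
    define l where "l = r / (4 * V)"
    have l0: "0 < l" using r V0 by (simp add: l_def)
    have lK: "l * (2 * T) \<le> 1"
    proof -
      have "l * (2 * T) = (T * r) / (2 * V)" using V0 by (simp add: l_def field_simps)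
      also have "\<dots> \<le> V / (2 * V)" using TrV V0 by (intro divide_right_mono) auto
      also have "\<dots> \<le> 1" using V0 by simp
      finally show ?thesis .
    qed
    have expo: "exp (- l * (4 * r / 5) + l^2 * V) \<le> Q"
    proof -
      have "r^2 / V \<ge> 0" using V0 by simp
      have "- l * (4 * r / 5) + l^2 * V = - (11 / 80) * (r^2 / V)" using V0
        by (simp add: l_def field_simps power2_eq_square)
      also have "\<dots> \<le> - (r^2 / (10 * V))" using V0 \<open>r^2 / V \<ge> 0\<close> by (simp add: field_simps)
      finally show ?thesis unfolding Q_def by simp
    qed
    have PZ: "prob {\<omega> \<in> space M. 4 * r / 5 \<le> (\<Sum>i\<in>?I. Z i \<omega>)} \<le> Q"
    proof -
      have "prob {\<omega> \<in> space M. 4 * r / 5 \<le> (\<Sum>i\<in>?I. Z i \<omega>)} \<le> exp (- l * (4 * r / 5) + l^2 * V)"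
        by (rule bern_upper[OF _ indZ measZ _ meanZ sumZ2 l0 lK]) (use bndZ in auto)
      thus ?thesis using expo by linarith
    qed
    have PNZ: "prob {\<omega> \<in> space M. 4 * r / 5 \<le> (\<Sum>i\<in>?I. - Z i \<omega>)} \<le> Q"
    proof -
      have "prob {\<omega> \<in> space M. 4 * r / 5 \<le> (\<Sum>i\<in>?I. - Z i \<omega>)} \<le> exp (- l * (4 * r / 5) + l^2 * V)"
        by (rule bern_upper[OF _ indNZ _ _ _ _ l0 lK]) (use bndZ measZ meanZ sumZ2 in auto)
      thus ?thesis using expo by linarith
    qed
    have PU: "prob (\<Union>i\<in>?I. A i) \<le> Q"
    proof -
      have "A ` ?I \<subseteq> events" using measA by auto
      from finite_measure_subadditive_finite[OF _ this] show ?thesis using sumA by simp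
    qed
    have sub: "{\<omega> \<in> space M. r \<le> \<bar>\<Sum>i=1..m. X i \<omega>\<bar>} \<subseteq>
        ((\<Union>i\<in>?I. A i) \<union> {\<omega> \<in> space M. 4 * r / 5 \<le> (\<Sum>i\<in>?I. Z i \<omega>)}) \<union> {\<omega> \<in> space M. 4 * r / 5 \<le> (\<Sum>i\<in>?I. - Z i \<omega>)}"
    proof
      fix \<omega> assume "\<omega> \<in> {\<omega> \<in> space M. r \<le> \<bar>\<Sum>i=1..m. X i \<omega>\<bar>}"
      hence w: "\<omega> \<in> space M" and big: "r \<le> \<bar>\<Sum>i=1..m. X i \<omega>\<bar>" by auto
      show "\<omega> \<in> ((\<Union>i\<in>?I. A i) \<union> {\<omega> \<in> space M. 4 * r / 5 \<le> (\<Sum>i\<in>?I. Z i \<omega>)}) \<union> {\<omega> \<in> space M. 4 * r / 5 \<le> (\<Sum>i\<in>?I. - Z i \<omega>)}"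
      proof (cases "\<omega> \<in> (\<Union>i\<in>?I. A i)")
        case True thus ?thesis by blast
      next
        case False
        hence "\<bar>X i \<omega>\<bar> \<le> T" if "i \<in> ?I" for i using w that by (auto simp: A_def not_less)
        hence XZ: "X i \<omega> = Z i \<omega> + mu i" if "i \<in> ?I" for i using that by (simp add: Z_def Y_def)
        have "(\<Sum>i=1..m. X i \<omega>) = (\<Sum>i\<in>?I. Z i \<omega>) + (\<Sum>i\<in>?I. mu i)"
          by (simp add: XZ sum.distrib)
        moreover have "\<bar>\<Sum>i\<in>?I. mu i\<bar> \<le> r / 5" using order.trans[OF sum_abs muS] .
        ultimately have "4 * r / 5 \<le> \<bar>\<Sum>i\<in>?I. Z i \<omega>\<bar>" using big by linarith
        hence "4 * r / 5 \<le> (\<Sum>i\<in>?I. Z i \<omega>) \<or> 4 * r / 5 \<le> (\<Sum>i\<in>?I. - Z i \<omega>)"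
          by (auto simp: sum_negf abs_if split: if_splits)
        thus ?thesis using w by blast
      qed
    qed
    have evU: "(\<Union>i\<in>?I. A i) \<in> events" using measA by auto
    have mS: "(\<lambda>\<omega>. \<Sum>i\<in>?I. Z i \<omega>) \<in> borel_measurable M"
      by (rule borel_measurable_sum) (rule measZ)
    have mNS: "(\<lambda>\<omega>. \<Sum>i\<in>?I. - Z i \<omega>) \<in> borel_measurable M"
      by (rule borel_measurable_sum) (use measZ in simp)
    have evP: "{\<omega> \<in> space M. 4 * r / 5 \<le> (\<Sum>i\<in>?I. Z i \<omega>)} \<in> events"
      using mS by measurable
    have evN: "{\<omega> \<in> space M. 4 * r / 5 \<le> (\<Sum>i\<in>?I. - Z i \<omega>)} \<in> events"
      using mNS by measurable
    have "measure M {\<omega> \<in> space M. \<bar>\<Sum>i=1..m. X i \<omega>\<bar> \<ge> r} \<le>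
        prob (((\<Union>i\<in>?I. A i) \<union> {\<omega> \<in> space M. 4 * r / 5 \<le> (\<Sum>i\<in>?I. Z i \<omega>)}) \<union> {\<omega> \<in> space M. 4 * r / 5 \<le> (\<Sum>i\<in>?I. - Z i \<omega>)})"
      by (rule finite_measure_mono[OF sub]) (intro sets.Un evU evP evN)
    also have "\<dots> \<le> prob ((\<Union>i\<in>?I. A i) \<union> {\<omega> \<in> space M. 4 * r / 5 \<le> (\<Sum>i\<in>?I. Z i \<omega>)}) + prob {\<omega> \<in> space M. 4 * r / 5 \<le> (\<Sum>i\<in>?I. - Z i \<omega>)}"
      by (rule measure_subadditive) (rule sets.Un[OF evU evP], rule evN, simp_all add: emeasure_finite)
    also have "\<dots> \<le> (prob (\<Union>i\<in>?I. A i) + prob {\<omega> \<in> space M. 4 * r / 5 \<le> (\<Sum>i\<in>?I. Z i \<omega>)}) + prob {\<omega> \<in> space M. 4 * r / 5 \<le> (\<Sum>i\<in>?I. - Z i \<omega>)}"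
      by (intro add_right_mono measure_subadditive evU evP) (simp_all add: emeasure_finite)
    also have "\<dots> \<le> 3 * Q" using PU PZ PNZ by linarith
    finally show ?thesis unfolding Q_def .
  qed
qed

end
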